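(* Let $X$ be a finite set. Define $\Phi:\mathbf{Net}(X)\to\mathbf{Cliqgm}(X)$ by letting $\Phi(N_X)(t)$ be the set of maximal cliques of the graph $G_t=(V_t,E_t)$ with $V_t=\{x\in X\mid N_X(x,x)\leq t\}$ and $E_t=\{\{x,x'\}\subset X\mid x\neq x',\ N_X(x,x')\leq t\}$ (equivalently, $\Phi(N_X)(t)$ is the join in $\mathbf{Cliq}(X)$ of the clique-sets $\{\{x,x'\}\}$ over all $x,x'\in X$ with $N_X(x,x')\leq t$). Define $\Psi:\mathbf{Cliqgm}(X)\to\mathbf{Net}(X)$ by $$\Psi(C_X)(x,x'):=\min\{t\in\mathbb{R}\mid x,x'\text{ belong to some clique in }C_X(t)\}.$$ Then $\Phi$ and $\Psi$ are well defined, mutually inverse bijections, and they are isomorphisms of posets: for $N_X,N'_X\in\mathbf{Net}(X)$, $N_X\geq N'_X$ entrywise if and only if $\Phi(N_X)(t)\leq\Phi(N'_X)(t)$ for all $t\in\mathbb{R}$.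
   Context: A phylogenetic network over a finite set $X$ is a map $N_X:X\times X\to\mathbb{R}$ with $N_X(x,x')=N_X(x',x)$ and $\max\{N_X(x,x),N_X(x',x')\}\leq N_X(x,x')$ for all $x,x'\in X$; $\mathbf{Net}(X)$ is the set of these, ordered by $N_X\leq N'_X$ iff $N_X\geq N'_X$ entrywise. A clique-set of $X$ is a set $\mathcal{C}$ of nonempty subsets of $X$ (cliques) such that (i) no member of $\mathcal{C}$ is contained in another member, and (ii) for every nonempty $Y\subset X$, if every pair $y,y'\in Y$ (possibly $y=y'$) is contained in some member of $\mathcal{C}$, then $Y$ is contained in some member of $\mathcal{C}$. $\mathbf{Cliq}(X)$ is the set of clique-sets, ordered by $\mathcal{C}\leq\mathcal{C}'$ iff every member of $\mathcal{C}$ is contained in some member of $\mathcal{C}'$; the join of clique-sets is the set of maximal cliques of the union of their associated graphs (vertices = union of members, edges = pairs of distinct elements lying in a common member). A cliquegram over $X$ is a map $C_X:\mathbb{R}\to\mathbf{Cliq}(X)$ such that (1) $C_X(t)\leq C_X(s)$ for $t\leq s$; (2) there are $t_0,t_1\in\mathbb{R}$ with $C_X(t)=\{X\}$ for $t\geq t_0$ and $C_X(t)=\emptyset$ for $t\leq t_1$; (3) there are real numbers $a_1<\dots<a_n$ with $C_X$ constant on $(-\infty,a_1)$, on each $[a_i,a_{i+1})$ and on $[a_n,\infty)$. $\mathbf{Cliqgm}(X)$ is the set of cliquegrams ordered pointwise. The maximal cliques of a graph are the inclusion-maximal vertex subsets that are pairwise adjacent. *)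

theory Defs
  imports Complex_Main "HOL-Library.FuncSet"
begin

definition Net :: "'a set \<Rightarrow> ('a \<times> 'a \<Rightarrow> real) set" where
  "Net X = {N. N \<in> extensional (X \<times> X) \<and>
      (\<forall>x\<in>X. \<forall>x'\<in>X. N (x, x') = N (x', x) \<and> max (N (x, x)) (N (x', x')) \<le> N (x, x'))}"

definition Cliq :: "'a set \<Rightarrow> 'a set set set" where
  "Cliq X = {C. (\<forall>K\<in>C. K \<noteq> {} \<and> K \<subseteq> X) \<and>
      (\<forall>K\<in>C. \<forall>K'\<in>C. K \<subseteq> K' \<longrightarrow> K = K') \<and>
      (\<forall>Y. Y \<noteq> {} \<and> Y \<subseteq> X \<and> (\<forall>y\<in>Y. \<forall>y'\<in>Y. \<exists>K\<in>C. y \<in> K \<and> y' \<in> K)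
           \<longrightarrow> (\<exists>K\<in>C. Y \<subseteq> K))}"

definition cliq_le :: "'a set set \<Rightarrow> 'a set set \<Rightarrow> bool" where
  "cliq_le C C' \<longleftrightarrow> (\<forall>K\<in>C. \<exists>K'\<in>C'. K \<subseteq> K')"

definition Cliqgm :: "'a set \<Rightarrow> (real \<Rightarrow> 'a set set) set" where
  "Cliqgm X = {C. (\<forall>t. C t \<in> Cliq X) \<and>
      (\<forall>t s. t \<le> s \<longrightarrow> cliq_le (C t) (C s)) \<and>
      (\<exists>t0 t1. (\<forall>t\<ge>t0. C t = {X}) \<and> (\<forall>t\<le>t1. C t = {})) \<and>
      (\<exists>a::real list. a \<noteq> [] \<and> sorted_wrt (<) a \<and>
         (\<forall>s t. s < hd a \<and> t < hd a \<longrightarrow> C s = C t) \<and>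
         (\<forall>i. Suc i < length a \<longrightarrow>
            (\<forall>s t. s \<in> {a ! i ..< a ! Suc i} \<and> t \<in> {a ! i ..< a ! Suc i} \<longrightarrow> C s = C t)) \<and>
         (\<forall>s t. last a \<le> s \<and> last a \<le> t \<longrightarrow> C s = C t))}"

text \<open>Maximal cliques of the graph with vertex set V and edge set E (edges are
  2-element sets). Cliques are nonempty (so the empty graph has no maximal cliques).\<close>
definition is_clique :: "'a set \<Rightarrow> 'a set set \<Rightarrow> 'a set \<Rightarrow> bool" where
  "is_clique V E K \<longleftrightarrow> K \<noteq> {} \<and> K \<subseteq> V \<and> (\<forall>x\<in>K. \<forall>y\<in>K. x \<noteq> y \<longrightarrow> {x, y} \<in> E)"

definition maximal_cliques :: "'a set \<Rightarrow> 'a set set \<Rightarrow> 'a set set" where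
  "maximal_cliques V E = {K. is_clique V E K \<and> (\<forall>K'. is_clique V E K' \<and> K \<subseteq> K' \<longrightarrow> K' = K)}"

definition Phi :: "'a set \<Rightarrow> ('a \<times> 'a \<Rightarrow> real) \<Rightarrow> real \<Rightarrow> 'a set set" where
  "Phi X N t = maximal_cliques {x\<in>X. N (x, x) \<le> t}
      {{x, x'} | x x'. x \<in> X \<and> x' \<in> X \<and> x \<noteq> x' \<and> N (x, x') \<le> t}"

definition Psi :: "'a set \<Rightarrow> (real \<Rightarrow> 'a set set) \<Rightarrow> ('a \<times> 'a \<Rightarrow> real)" where
  "Psi X C = (\<lambda>(x, x') \<in> X \<times> X. LEAST t. \<exists>K\<in>C t. x \<in> K \<and> x' \<in> K)"

end

theory Submission
  imports Defs
begin


lemma clique_extend: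
  assumes "finite V" "is_clique V E K"
  shows "\<exists>M\<in>maximal_cliques V E. K \<subseteq> M"
proof -
  let ?S = "{K'. is_clique V E K' \<and> K \<subseteq> K'}"
  have fin: "finite ?S" using assms(1) by (rule finite_subset[rotated, OF finite_Pow_iff[THEN iffD2]]) (auto simp: is_clique_def)
  have "?S \<noteq> {}" using assms(2) by auto
  then obtain M where M: "M \<in> ?S" "\<forall>b\<in>?S. M \<subseteq> b \<longrightarrow> M = b"
    using finite_has_maximal[OF fin] by blast
  have "M \<in> maximal_cliques V E" unfolding maximal_cliques_def
    using M by (auto dest: order_trans[of K M])
  then show ?thesis using M by blast
qed

lemma maxcl_Cliq:
  assumes "finite V" "V \<subseteq> X"
  shows "maximal_cliques V E \<in> Cliq X"
  unfolding Cliq_def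
proof (intro CollectI conjI ballI allI impI)
  fix K assume "K \<in> maximal_cliques V E"
  then show "K \<noteq> {}" "K \<subseteq> X" using assms by (auto simp: maximal_cliques_def is_clique_def)
next
  fix K K' assume "K \<in> maximal_cliques V E" "K' \<in> maximal_cliques V E" "K \<subseteq> K'"
  then show "K = K'" by (auto simp: maximal_cliques_def)
next
  fix Y assume Y: "Y \<noteq> {} \<and> Y \<subseteq> X \<and> (\<forall>y\<in>Y. \<forall>y'\<in>Y. \<exists>K\<in>maximal_cliques V E. y \<in> K \<and> y' \<in> K)"
  have "is_clique V E Y"
    unfolding is_clique_def
  proof (intro conjI ballI impI)
    show "Y \<noteq> {}" using Y by blast
    show "Y \<subseteq> V"
    proof
      fix y assume "y \<in> Y"
      then obtain K where "K \<in> maximal_cliques V E" "y \<in> K" using Y by blast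
      then show "y \<in> V" unfolding maximal_cliques_def is_clique_def by blast
    qed
    fix x y assume "x \<in> Y" "y \<in> Y" "x \<noteq> y"
    then obtain K where "K \<in> maximal_cliques V E" "x \<in> K" "y \<in> K" using Y by blast
    then show "{x, y} \<in> E" using \<open>x \<noteq> y\<close> unfolding maximal_cliques_def is_clique_def by blast
  qed
  then show "\<exists>K\<in>maximal_cliques V E. Y \<subseteq> K" using clique_extend[OF assms(1)] by blast
qed

lemma maxcl_mono:
  assumes "finite V'" "V \<subseteq> V'" "E \<subseteq> E'"
  shows "cliq_le (maximal_cliques V E) (maximal_cliques V' E')"
  unfolding cliq_le_def
proof
  fix K assume "K \<in> maximal_cliques V E"
  then have "is_clique V' E' K" using assms by (auto simp: maximal_cliques_def is_clique_def)
  then show "\<exists>K'\<in>maximal_cliques V' E'. K \<subseteq> K'" using clique_extend[OF assms(1)] by blast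
qed

lemma pair_ex: "(\<exists>a b. {x, y} = {a, b} \<and> P a b) \<longleftrightarrow> (P x y \<or> P y x)"
  by (auto simp: doubleton_eq_iff)

lemma maxcl_of_Cliq:
  assumes "D \<in> Cliq X"
    and Eq: "\<And>x y. x \<noteq> y \<Longrightarrow> {x, y} \<in> E \<longleftrightarrow> (x \<in> X \<and> y \<in> X \<and> (\<exists>K\<in>D. x \<in> K \<and> y \<in> K))"
  shows "maximal_cliques {x\<in>X. \<exists>K\<in>D. x \<in> K} E = D"
proof -
  let ?V = "{x\<in>X. \<exists>K\<in>D. x \<in> K}"
  have CC: "(\<forall>K\<in>D. K \<noteq> {} \<and> K \<subseteq> X) \<and>
      (\<forall>K\<in>D. \<forall>K'\<in>D. K \<subseteq> K' \<longrightarrow> K = K') \<and>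
      (\<forall>Y. Y \<noteq> {} \<and> Y \<subseteq> X \<and> (\<forall>y\<in>Y. \<forall>y'\<in>Y. \<exists>K\<in>D. y \<in> K \<and> y' \<in> K)
           \<longrightarrow> (\<exists>K\<in>D. Y \<subseteq> K))" using assms(1) unfolding Cliq_def by (rule CollectD)
  have D1: "\<forall>K\<in>D. K \<noteq> {} \<and> K \<subseteq> X" using CC by (rule conjunct1)
  have D2: "\<forall>K\<in>D. \<forall>K'\<in>D. K \<subseteq> K' \<longrightarrow> K = K'" using CC[THEN conjunct2] by (rule conjunct1)
  have D3: "\<exists>K\<in>D. Y \<subseteq> K" if "Y \<noteq> {}" "Y \<subseteq> X" "\<forall>y\<in>Y. \<forall>y'\<in>Y. \<exists>K\<in>D. y \<in> K \<and> y' \<in> K" for Y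
    using CC[THEN conjunct2, THEN conjunct2, THEN spec, of Y] that by blast
  have cl: "\<exists>K\<in>D. Y \<subseteq> K" if c: "is_clique ?V E Y" for Y
  proof (rule D3)
    show "Y \<noteq> {}" "Y \<subseteq> X" using c unfolding is_clique_def by auto
    show "\<forall>y\<in>Y. \<forall>y'\<in>Y. \<exists>K\<in>D. y \<in> K \<and> y' \<in> K"
    proof (intro ballI)
      fix y y' assume y: "y \<in> Y" and y': "y' \<in> Y"
      show "\<exists>K\<in>D. y \<in> K \<and> y' \<in> K"
      proof (cases "y = y'")
        case True
        then have "y \<in> ?V" using c y unfolding is_clique_def by blast
        then show ?thesis using True by blast
      next
        case False
        then have "{y, y'} \<in> E" using c y y' unfolding is_clique_def by blast
        then show ?thesis using Eq[OF False] by blast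
      qed
    qed
  qed
  have Kcl: "is_clique ?V E K" if K: "K \<in> D" for K
    unfolding is_clique_def
  proof (intro conjI ballI impI)
    show "K \<noteq> {}" using D1 K by blast
    show "K \<subseteq> ?V" using D1 K by blast
    fix x y assume "x \<in> K" "y \<in> K" "x \<noteq> y"
    then show "{x, y} \<in> E" using Eq[of x y] D1 K by blast
  qed
  show ?thesis
  proof
    show "maximal_cliques ?V E \<subseteq> D"
    proof
      fix M assume M: "M \<in> maximal_cliques ?V E"
      then have Mc: "is_clique ?V E M" "\<forall>K'. is_clique ?V E K' \<and> M \<subseteq> K' \<longrightarrow> K' = M"
        unfolding maximal_cliques_def by blast+
      obtain K where K: "K \<in> D" "M \<subseteq> K" using cl[OF Mc(1)] by blast
      then have "K = M" using Mc(2) Kcl[OF K(1)] by blast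
      then show "M \<in> D" using K by simp
    qed
  next
    show "D \<subseteq> maximal_cliques ?V E"
    proof
      fix K assume K: "K \<in> D"
      have "K' = K" if h1: "is_clique ?V E K'" and h2: "K \<subseteq> K'" for K'
      proof -
        obtain K'' where "K'' \<in> D" "K' \<subseteq> K''" using cl[OF h1] by blast
        then show ?thesis using D2 K h2 by blast
      qed
      then show "K \<in> maximal_cliques ?V E" using Kcl[OF K] unfolding maximal_cliques_def by blast
    qed
  qed
qed



lemma E_intro: "P a b \<Longrightarrow> {a, b} \<in> {{x, x'} |x x'. P x x'}"
  by (rule CollectI, rule exI[of _ a], rule exI[of _ b], rule conjI, rule refl)

lemma E_sub: assumes H: "\<And>a b. P a b \<Longrightarrow> Q a b" shows "{{x, x'} |x x'. P x x'} \<subseteq> {{x, x'} |x x'. Q x x'}"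
proof
  fix e assume "e \<in> {{x, x'} |x x'. P x x'}"
  then have "\<exists>a b. e = {a, b} \<and> P a b" by (rule CollectD)
  then obtain a b where "e = {a, b}" "P a b" by (elim exE conjE)
  then show "e \<in> {{x, x'} |x x'. Q x x'}" using E_intro[of Q a b] H by simp
qed

lemma E_mem: "{a, b} \<in> {{x, x'} |x x'. P x x'} \<longleftrightarrow> P a b \<or> P b a"
  by (simp add: pair_ex)

lemma Net_D:
  assumes "N \<in> Net X" "x \<in> X" "x' \<in> X"
  shows "N (x, x') = N (x', x)" "N (x, x) \<le> N (x, x')" "N (x', x') \<le> N (x, x')"
  using assms unfolding Net_def by auto

lemma Phi_Cliq: "finite X \<Longrightarrow> Phi X N t \<in> Cliq X"
  unfolding Phi_def by (rule maxcl_Cliq) auto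

lemma Phi_pair:
  assumes N: "N \<in> Net X" and fin: "finite X" and x: "x \<in> X" and x': "x' \<in> X"
  shows "(\<exists>K\<in>Phi X N t. x \<in> K \<and> x' \<in> K) \<longleftrightarrow> N (x, x') \<le> t"
proof
  assume "\<exists>K\<in>Phi X N t. x \<in> K \<and> x' \<in> K"
  then obtain K where K: "K \<in> Phi X N t" "x \<in> K" "x' \<in> K" by blast
  then have Kc: "is_clique {x\<in>X. N (x, x) \<le> t}
      {{x, x'} |x x'. x \<in> X \<and> x' \<in> X \<and> x \<noteq> x' \<and> N (x, x') \<le> t} K"
    unfolding Phi_def maximal_cliques_def by blast
  show "N (x, x') \<le> t"
  proof (cases "x = x'")
    case True then show ?thesis using K Kc unfolding is_clique_def by auto
  next
    case False
    then have "{x, x'} \<in> {{x, x'} |x x'. x \<in> X \<and> x' \<in> X \<and> x \<noteq> x' \<and> N (x, x') \<le> t}"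
      using K Kc unfolding is_clique_def by blast
    then show ?thesis unfolding E_mem using Net_D(1)[OF N x x'] by auto
  qed
next
  assume le: "N (x, x') \<le> t"
  have "is_clique {x\<in>X. N (x, x) \<le> t}
      {{x, x'} |x x'. x \<in> X \<and> x' \<in> X \<and> x \<noteq> x' \<and> N (x, x') \<le> t} {x, x'}"
    unfolding is_clique_def
  proof (intro conjI ballI impI)
    show "{x, x'} \<subseteq> {x \<in> X. N (x, x) \<le> t}" using le Net_D[OF N x x'] x x' by auto
    fix a b assume ab: "a \<in> {x, x'}" "b \<in> {x, x'}" "a \<noteq> b"
    then have "(a = x \<and> b = x') \<or> (a = x' \<and> b = x)" by auto
    then show "{a, b} \<in> {{x, x'} |x x'. x \<in> X \<and> x' \<in> X \<and> x \<noteq> x' \<and> N (x, x') \<le> t}"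
      unfolding E_mem using le Net_D(1)[OF N x x'] x x' ab(3) by auto
  qed auto
  then show "\<exists>K\<in>Phi X N t. x \<in> K \<and> x' \<in> K"
    unfolding Phi_def using clique_extend[OF _ , of "{x\<in>X. N (x, x) \<le> t}"] fin by fastforce
qed

lemma Phi_mono: "finite X \<Longrightarrow> t \<le> s \<Longrightarrow> cliq_le (Phi X N t) (Phi X N s)"
  unfolding Phi_def by (rule maxcl_mono) (auto intro!: E_sub)

lemma Phi_cong:
  assumes "\<forall>v\<in>N ` (X \<times> X). (v \<le> s \<longleftrightarrow> v \<le> t)"
  shows "Phi X N s = Phi X N t"
proof -
  have V: "{x\<in>X. N (x, x) \<le> s} = {x\<in>X. N (x, x) \<le> t}" using assms by auto
  have eq: "\<And>x x'. (x \<in> X \<and> x' \<in> X \<and> x \<noteq> x' \<and> N (x, x') \<le> s) \<longleftrightarrow> (x \<in> X \<and> x' \<in> X \<and> x \<noteq> x' \<and> N (x, x') \<le> t)"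
    using assms by auto
  show ?thesis unfolding Phi_def V by (simp only: eq)
qed

lemma Phi_top:
  assumes fin: "finite X" and ne: "X \<noteq> {}" and t: "\<forall>v\<in>N ` (X \<times> X). v \<le> t"
  shows "Phi X N t = {X}"
proof -
  have V: "{x\<in>X. N (x, x) \<le> t} = X" using t by auto
  have cX: "is_clique X {{x, x'} |x x'. x \<in> X \<and> x' \<in> X \<and> x \<noteq> x' \<and> N (x, x') \<le> t} X"
    unfolding is_clique_def
  proof (intro conjI ballI impI)
    fix a b assume "a \<in> X" "b \<in> X" "a \<noteq> b"
    then show "{a, b} \<in> {{x, x'} |x x'. x \<in> X \<and> x' \<in> X \<and> x \<noteq> x' \<and> N (x, x') \<le> t}"
      using t by (intro E_intro) auto
  qed (use ne in auto)
  let ?E = "{{x, x'} |x x'. x \<in> X \<and> x' \<in> X \<and> x \<noteq> x' \<and> N (x, x') \<le> t}"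
  have sub: "K \<subseteq> X" if "is_clique X ?E K" for K using that by (simp add: is_clique_def)
  show ?thesis unfolding Phi_def V
  proof (intro set_eqI iffI)
    fix K assume "K \<in> maximal_cliques X ?E"
    then have KK: "is_clique X ?E K \<and> (\<forall>K'. is_clique X ?E K' \<and> K \<subseteq> K' \<longrightarrow> K' = K)"
      unfolding maximal_cliques_def by (rule CollectD)
    have Kc: "is_clique X ?E K" "\<forall>K'. is_clique X ?E K' \<and> K \<subseteq> K' \<longrightarrow> K' = K"
      using KK by (rule conjunct1, rule conjunct2)
    have "X = K" using Kc(2)[rule_format, of X] cX sub[OF Kc(1)] by blast
    then show "K \<in> {X}" by simp
  next
    fix K assume "K \<in> {X}"
    then have KX: "K = X" by simp
    have "\<forall>K'. is_clique X ?E K' \<and> X \<subseteq> K' \<longrightarrow> K' = X"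
      using sub by blast
    then show "K \<in> maximal_cliques X ?E"
      using cX KX unfolding maximal_cliques_def by (intro CollectI conjI) simp_all
  qed
qed

lemma Phi_bot:
  assumes t: "\<forall>v\<in>N ` (X \<times> X). t < v"
  shows "Phi X N t = {}"
proof -
  have V: "{x\<in>X. N (x, x) \<le> t} = {}" using t by force
  show ?thesis unfolding Phi_def V maximal_cliques_def is_clique_def by simp
qed



lemma sw_le:
  assumes "sorted_wrt (<) (a::real list)" "i \<le> j" "j < length a"
  shows "a ! i \<le> a ! j"
  using assms sorted_wrt_nth_less[OF assms(1), of i j] by (cases "i = j") auto

lemma Phi_Cliqgm:
  assumes N: "N \<in> Net X" and fin: "finite X" and ne: "X \<noteq> {}"
  shows "Phi X N \<in> Cliqgm X"
proof -
  let ?S = "N ` (X \<times> X)"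
  have finS: "finite ?S" using fin by simp
  have neS: "?S \<noteq> {}" using ne by auto
  obtain a where a: "sorted_wrt (<) a" "set a = ?S"
    using ex1_sorted_list_for_set_if_finite[OF finS] by blast
  have ane: "a \<noteq> []" using a(2) neS by auto
  have hd_le: "hd a \<le> v" if vS: "v \<in> ?S" for v
  proof -
    have "v \<in> set a" using vS a(2) by simp
    then obtain j where j: "j < length a" "v = a ! j" by (metis in_set_conv_nth)
    then show ?thesis using sw_le[OF a(1), of 0 j] ane by (simp add: hd_conv_nth)
  qed
  have last_ge: "v \<le> last a" if vS: "v \<in> ?S" for v
  proof -
    have "v \<in> set a" using vS a(2) by simp
    then obtain j where j: "j < length a" "v = a ! j" by (metis in_set_conv_nth)
    then show ?thesis using sw_le[OF a(1), of j "length a - 1"] ane by (simp add: last_conv_nth)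
  qed
  have top: "\<forall>t\<ge>Max ?S. Phi X N t = {X}"
  proof (intro allI impI)
    fix t assume t: "Max ?S \<le> t"
    have "\<forall>v\<in>?S. v \<le> t"
    proof
      fix v assume "v \<in> ?S"
      then have "v \<le> Max ?S" by (rule Max_ge[OF finS])
      then show "v \<le> t" using t by linarith
    qed
    then show "Phi X N t = {X}" by (rule Phi_top[OF fin ne])
  qed
  have bot: "\<forall>t\<le>Min ?S - 1. Phi X N t = {}"
  proof (intro allI impI)
    fix t assume "t \<le> Min ?S - 1"
    then have t: "t < Min ?S" by linarith
    have "\<forall>v\<in>?S. t < v"
    proof
      fix v assume "v \<in> ?S"
      then have "Min ?S \<le> v" by (rule Min_le[OF finS])
      then show "t < v" using t by linarith
    qed
    then show "Phi X N t = {}" by (rule Phi_bot)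
  qed
  have mid: "Phi X N s = Phi X N t"
    if i: "Suc i < length a" and s: "s \<in> {a ! i ..< a ! Suc i}" and t: "t \<in> {a ! i ..< a ! Suc i}" for i s t
  proof (rule Phi_cong, intro ballI)
    fix v assume "v \<in> ?S"
    then obtain j where j: "j < length a" "v = a ! j" using a(2) by (metis in_set_conv_nth)
    show "v \<le> s \<longleftrightarrow> v \<le> t"
    proof (cases "j \<le> i")
      case True
      then have "v \<le> a ! i" using sw_le[OF a(1) True] i j by simp
      then show ?thesis using s t by auto
    next
      case False
      then have "a ! Suc i \<le> v" using sw_le[OF a(1), of "Suc i" j] j by simp
      then show ?thesis using s t by auto
    qed
  qed
  show ?thesis unfolding Cliqgm_def
  proof (intro CollectI conjI allI impI)
    show "\<And>t. Phi X N t \<in> Cliq X" using Phi_Cliq[OF fin] .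
    show "\<And>t s. t \<le> s \<Longrightarrow> cliq_le (Phi X N t) (Phi X N s)" using Phi_mono[OF fin] .
    show "\<exists>t0 t1. (\<forall>t\<ge>t0. Phi X N t = {X}) \<and> (\<forall>t\<le>t1. Phi X N t = {})" using top bot by blast
    show "\<exists>a. a \<noteq> [] \<and> sorted_wrt (<) a \<and>
         (\<forall>s t. s < hd a \<and> t < hd a \<longrightarrow> Phi X N s = Phi X N t) \<and>
         (\<forall>i. Suc i < length a \<longrightarrow>
            (\<forall>s t. s \<in> {a ! i ..< a ! Suc i} \<and> t \<in> {a ! i ..< a ! Suc i} \<longrightarrow> Phi X N s = Phi X N t)) \<and>
         (\<forall>s t. last a \<le> s \<and> last a \<le> t \<longrightarrow> Phi X N s = Phi X N t)"
    proof (intro exI[of _ a] conjI allI impI)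
      show "a \<noteq> []" "sorted_wrt (<) a" using ane a by auto
      fix s t
      assume st: "s < hd a \<and> t < hd a"
      have "\<forall>v\<in>?S. (v \<le> s \<longleftrightarrow> v \<le> t)"
      proof
        fix v assume "v \<in> ?S"
        then have "hd a \<le> v" by (rule hd_le)
        then show "v \<le> s \<longleftrightarrow> v \<le> t" using st by linarith
      qed
      then show "Phi X N s = Phi X N t" by (rule Phi_cong)
    next
      fix i s t assume "Suc i < length a" "s \<in> {a ! i..<a ! Suc i} \<and> t \<in> {a ! i..<a ! Suc i}"
      then show "Phi X N s = Phi X N t" using mid by blast
    next
      fix s t assume st: "last a \<le> s \<and> last a \<le> t"
      have "\<forall>v\<in>?S. (v \<le> s \<longleftrightarrow> v \<le> t)"
      proof
        fix v assume "v \<in> ?S"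
        then have "v \<le> last a" by (rule last_ge)
        then show "v \<le> s \<longleftrightarrow> v \<le> t" using st by linarith
      qed
      then show "Phi X N s = Phi X N t" by (rule Phi_cong)
    qed
  qed
qed



lemma Cliqgm_D:
  assumes "C \<in> Cliqgm X"
  shows "\<forall>t. C t \<in> Cliq X" "\<forall>t s. t \<le> s \<longrightarrow> cliq_le (C t) (C s)"
    "\<exists>t0 t1. (\<forall>t\<ge>t0. C t = {X}) \<and> (\<forall>t\<le>t1. C t = {})"
    "\<exists>a::real list. a \<noteq> [] \<and> sorted_wrt (<) a \<and>
         (\<forall>s t. s < hd a \<and> t < hd a \<longrightarrow> C s = C t) \<and>
         (\<forall>i. Suc i < length a \<longrightarrow>
            (\<forall>s t. s \<in> {a ! i ..< a ! Suc i} \<and> t \<in> {a ! i ..< a ! Suc i} \<longrightarrow> C s = C t)) \<and>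
         (\<forall>s t. last a \<le> s \<and> last a \<le> t \<longrightarrow> C s = C t)"
proof -
  have H: "(\<forall>t. C t \<in> Cliq X) \<and>
      (\<forall>t s. t \<le> s \<longrightarrow> cliq_le (C t) (C s)) \<and>
      (\<exists>t0 t1. (\<forall>t\<ge>t0. C t = {X}) \<and> (\<forall>t\<le>t1. C t = {})) \<and>
      (\<exists>a::real list. a \<noteq> [] \<and> sorted_wrt (<) a \<and>
         (\<forall>s t. s < hd a \<and> t < hd a \<longrightarrow> C s = C t) \<and>
         (\<forall>i. Suc i < length a \<longrightarrow>
            (\<forall>s t. s \<in> {a ! i ..< a ! Suc i} \<and> t \<in> {a ! i ..< a ! Suc i} \<longrightarrow> C s = C t)) \<and>
         (\<forall>s t. last a \<le> s \<and> last a \<le> t \<longrightarrow> C s = C t))"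
    using assms unfolding Cliqgm_def by (rule CollectD)
  show "\<forall>t. C t \<in> Cliq X" using H by (rule conjunct1)
  show "\<forall>t s. t \<le> s \<longrightarrow> cliq_le (C t) (C s)" using H[THEN conjunct2] by (rule conjunct1)
  show "\<exists>t0 t1. (\<forall>t\<ge>t0. C t = {X}) \<and> (\<forall>t\<le>t1. C t = {})" using H[THEN conjunct2, THEN conjunct2] by (rule conjunct1)
  show "\<exists>a::real list. a \<noteq> [] \<and> sorted_wrt (<) a \<and>
         (\<forall>s t. s < hd a \<and> t < hd a \<longrightarrow> C s = C t) \<and>
         (\<forall>i. Suc i < length a \<longrightarrow>
            (\<forall>s t. s \<in> {a ! i ..< a ! Suc i} \<and> t \<in> {a ! i ..< a ! Suc i} \<longrightarrow> C s = C t)) \<and>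
         (\<forall>s t. last a \<le> s \<and> last a \<le> t \<longrightarrow> C s = C t)" using H[THEN conjunct2, THEN conjunct2] by (rule conjunct2)
qed

lemma Cliqgm_mono_P:
  assumes "C \<in> Cliqgm X" "t \<le> s" "\<exists>K\<in>C t. x \<in> K \<and> x' \<in> K"
  shows "\<exists>K\<in>C s. x \<in> K \<and> x' \<in> K"
proof -
  have "cliq_le (C t) (C s)" using Cliqgm_D(2)[OF assms(1)] assms(2) by blast
  then have cl: "\<forall>K\<in>C t. \<exists>K'\<in>C s. K \<subseteq> K'" unfolding cliq_le_def .
  obtain K where K: "K \<in> C t" "x \<in> K" "x' \<in> K" using assms(3) by blast
  obtain K' where "K' \<in> C s" "K \<subseteq> K'" using cl K(1) by blast
  then show ?thesis using K by blast
qed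

lemma Cliqgm_min:
  assumes C: "C \<in> Cliqgm X" and x: "x \<in> X" and x': "x' \<in> X"
  shows "\<exists>t. (\<exists>K\<in>C t. x \<in> K \<and> x' \<in> K) \<and> (\<forall>s. (\<exists>K\<in>C s. x \<in> K \<and> x' \<in> K) \<longrightarrow> t \<le> s)"
proof -
  define P where "P t \<longleftrightarrow> (\<exists>K\<in>C t. x \<in> K \<and> x' \<in> K)" for t
  obtain t0 t1 where tt: "\<forall>t\<ge>t0. C t = {X}" "\<forall>t\<le>t1. C t = {}"
    using Cliqgm_D(3)[OF C] by blast
  obtain a :: "real list" where a: "a \<noteq> []" "sorted_wrt (<) a"
         "\<forall>s t. s < hd a \<and> t < hd a \<longrightarrow> C s = C t"
         "\<forall>i. Suc i < length a \<longrightarrow>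
            (\<forall>s t. s \<in> {a ! i ..< a ! Suc i} \<and> t \<in> {a ! i ..< a ! Suc i} \<longrightarrow> C s = C t)"
         "\<forall>s t. last a \<le> s \<and> last a \<le> t \<longrightarrow> C s = C t"
    using Cliqgm_D(4)[OF C] by (elim exE conjE) (rule that)
  have Pt0: "P t0" using tt x x' unfolding P_def by auto
  have key: "\<exists>c\<in>set a. c \<le> t \<and> P c" if Pt: "P t" for t
  proof (cases "t < hd a")
    case True
    have "C (min t t1) = C t" using a(3) True by (meson min.strict_coboundedI1)
    moreover have "C (min t t1) = {}" using tt(2) by simp
    ultimately show ?thesis using Pt unfolding P_def by simp
  next
    case False
    define I where "I = {i. i < length a \<and> a ! i \<le> t}"
    have finI: "finite I" unfolding I_def by simp
    have "0 \<in> I" using False a(1) unfolding I_def by (simp add: hd_conv_nth)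
    then have neI: "I \<noteq> {}" by blast
    define i where "i = Max I"
    have iI: "i \<in> I" using Max_in[OF finI neI] unfolding i_def .
    have "C t = C (a ! i)"
    proof (cases "Suc i < length a")
      case True
      have "Suc i \<notin> I" using Max_ge[OF finI, of "Suc i"] unfolding i_def by auto
      then have "t < a ! Suc i" using True unfolding I_def by auto
      have ai: "a ! i \<le> t" using iI unfolding I_def by simp
      have "a ! i < a ! Suc i" using sorted_wrt_nth_less[OF a(2), of i "Suc i"] True by simp
      then have "t \<in> {a ! i ..< a ! Suc i} \<and> a ! i \<in> {a ! i ..< a ! Suc i}"
        using ai \<open>t < a ! Suc i\<close> by simp
      then show ?thesis using a(4)[rule_format, OF True] by blast
    next
      case False
      then have "i = length a - 1" using iI unfolding I_def by auto
      then have "a ! i = last a" using a(1) by (simp add: last_conv_nth)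
      then show ?thesis using a(5) iI unfolding I_def by auto
    qed
    then have "P (a ! i)" using Pt unfolding P_def by simp
    moreover have "a ! i \<in> set a" "a ! i \<le> t" using iI unfolding I_def by simp_all
    ultimately show ?thesis by blast
  qed
  define F where "F = {c\<in>set a. P c}"
  have finF: "finite F" unfolding F_def by simp
  have neF: "F \<noteq> {}" using key[OF Pt0] unfolding F_def by blast
  have "P (Min F)" using Min_in[OF finF neF] unfolding F_def by simp
  moreover have "Min F \<le> s" if Ps: "P s" for s
  proof -
    obtain c where "c \<in> set a" "c \<le> s" "P c" using key[OF Ps] by blast
    then have "c \<in> F" "c \<le> s" unfolding F_def by simp_all
    then show ?thesis using Min_le[OF finF, of c] by linarith
  qed
  ultimately show ?thesis unfolding P_def by blast
qed

lemma Psi_le_iff: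
  assumes C: "C \<in> Cliqgm X" and x: "x \<in> X" and x': "x' \<in> X"
  shows "Psi X C (x, x') \<le> t \<longleftrightarrow> (\<exists>K\<in>C t. x \<in> K \<and> x' \<in> K)"
proof -
  obtain m where m: "\<exists>K\<in>C m. x \<in> K \<and> x' \<in> K" "\<forall>s. (\<exists>K\<in>C s. x \<in> K \<and> x' \<in> K) \<longrightarrow> m \<le> s"
    using Cliqgm_min[OF C x x'] by blast
  have "(LEAST t. \<exists>K\<in>C t. x \<in> K \<and> x' \<in> K) = m"
    by (rule Least_equality) (use m in blast)+
  then have "Psi X C (x, x') = m" unfolding Psi_def using x x' by simp
  then show ?thesis
  proof (intro iffI)
    assume "Psi X C (x, x') = m" "Psi X C (x, x') \<le> t"
    then have "m \<le> t" by simp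
    then show "\<exists>K\<in>C t. x \<in> K \<and> x' \<in> K" by (rule Cliqgm_mono_P[OF C _ m(1)])
  next
    assume "Psi X C (x, x') = m" "\<exists>K\<in>C t. x \<in> K \<and> x' \<in> K"
    then show "Psi X C (x, x') \<le> t" using m(2) by simp
  qed
qed

lemma Psi_Net:
  assumes C: "C \<in> Cliqgm X"
  shows "Psi X C \<in> Net X"
  unfolding Net_def
proof (intro CollectI conjI ballI)
  show "Psi X C \<in> extensional (X \<times> X)" unfolding Psi_def by simp
  fix x x' assume x: "x \<in> X" and x': "x' \<in> X"
  show "Psi X C (x, x') = Psi X C (x', x)"
    using Psi_le_iff[OF C x x'] Psi_le_iff[OF C x' x] by (meson order.antisym order.refl)
  have "Psi X C (x, x) \<le> Psi X C (x, x')"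
    using Psi_le_iff[OF C x x', of "Psi X C (x, x')"] Psi_le_iff[OF C x x] by auto
  moreover have "Psi X C (x', x') \<le> Psi X C (x, x')"
    using Psi_le_iff[OF C x x', of "Psi X C (x, x')"] Psi_le_iff[OF C x' x'] by auto
  ultimately show "max (Psi X C (x, x)) (Psi X C (x', x')) \<le> Psi X C (x, x')" by simp
qed

lemma Psi_Phi:
  assumes N: "N \<in> Net X" and fin: "finite X"
  shows "Psi X (Phi X N) = N"
proof
  fix z
  show "Psi X (Phi X N) z = N z"
  proof (cases "z \<in> X \<times> X")
    case True
    then obtain x x' where z: "z = (x, x')" "x \<in> X" "x' \<in> X" by blast
    have "(LEAST t. \<exists>K\<in>Phi X N t. x \<in> K \<and> x' \<in> K) = N (x, x')"
      using Phi_pair[OF N fin z(2,3)] by (auto intro!: Least_equality)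
    then show ?thesis unfolding Psi_def using z by simp
  next
    case False
    have "N z = undefined" using N False unfolding Net_def extensional_def by blast
    then show ?thesis using False unfolding Psi_def by simp
  qed
qed

lemma Phi_Psi:
  assumes C: "C \<in> Cliqgm X"
  shows "Phi X (Psi X C) = C"
proof
  fix t
  have Ct: "C t \<in> Cliq X" using Cliqgm_D(1)[OF C] by blast
  have V: "{x\<in>X. Psi X C (x, x) \<le> t} = {x\<in>X. \<exists>K\<in>C t. x \<in> K}"
    using Psi_le_iff[OF C] by auto
  have Eq: "{x, y} \<in> {{x, x'} |x x'. x \<in> X \<and> x' \<in> X \<and> x \<noteq> x' \<and> Psi X C (x, x') \<le> t}
     \<longleftrightarrow> (x \<in> X \<and> y \<in> X \<and> (\<exists>K\<in>C t. x \<in> K \<and> y \<in> K))" if "x \<noteq> y" for x y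
  proof -
    have "(x \<in> X \<and> y \<in> X \<and> x \<noteq> y \<and> Psi X C (x, y) \<le> t) \<longleftrightarrow> (x \<in> X \<and> y \<in> X \<and> (\<exists>K\<in>C t. x \<in> K \<and> y \<in> K))"
      using Psi_le_iff[OF C, of x y t] that by blast
    moreover have "(y \<in> X \<and> x \<in> X \<and> y \<noteq> x \<and> Psi X C (y, x) \<le> t) \<longleftrightarrow> (x \<in> X \<and> y \<in> X \<and> (\<exists>K\<in>C t. x \<in> K \<and> y \<in> K))"
      using Psi_le_iff[OF C, of y x t] that by blast
    ultimately show ?thesis unfolding E_mem by blast
  qed
  show "Phi X (Psi X C) t = C t" unfolding Phi_def V using maxcl_of_Cliq[OF Ct Eq] .
qed

lemma order_iso:
  assumes N: "N \<in> Net X" and N': "N' \<in> Net X" and fin: "finite X"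
  shows "(\<forall>x\<in>X. \<forall>x'\<in>X. N (x, x') \<ge> N' (x, x')) \<longleftrightarrow> (\<forall>t. cliq_le (Phi X N t) (Phi X N' t))"
proof
  assume H: "\<forall>x\<in>X. \<forall>x'\<in>X. N (x, x') \<ge> N' (x, x')"
  show "\<forall>t. cliq_le (Phi X N t) (Phi X N' t)"
  proof
    fix t
    show "cliq_le (Phi X N t) (Phi X N' t)" unfolding Phi_def
    proof (rule maxcl_mono)
      show "{x \<in> X. N (x, x) \<le> t} \<subseteq> {x \<in> X. N' (x, x) \<le> t}" using H by force
      show "{{x, x'} |x x'. x \<in> X \<and> x' \<in> X \<and> x \<noteq> x' \<and> N (x, x') \<le> t}
        \<subseteq> {{x, x'} |x x'. x \<in> X \<and> x' \<in> X \<and> x \<noteq> x' \<and> N' (x, x') \<le> t}"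
        by (rule E_sub) (use H in force)
    qed (simp add: fin)
  qed
next
  assume H: "\<forall>t. cliq_le (Phi X N t) (Phi X N' t)"
  show "\<forall>x\<in>X. \<forall>x'\<in>X. N (x, x') \<ge> N' (x, x')"
  proof (intro ballI)
    fix x x' assume x: "x \<in> X" and x': "x' \<in> X"
    obtain K where "K \<in> Phi X N (N (x, x'))" "x \<in> K" "x' \<in> K"
      using Phi_pair[OF N fin x x'] by blast
    then obtain K' where "K' \<in> Phi X N' (N (x, x'))" "x \<in> K'" "x' \<in> K'"
      using H unfolding cliq_le_def by blast
    then show "N (x, x') \<ge> N' (x, x')" using Phi_pair[OF N' fin x x'] by blast
  qed
qed


theorem mainTheorem2:
  fixes X :: "'a set"
  assumes "finite X" and "X \<noteq> {}"
  shows "(\<forall>N\<in>Net X. Phi X N \<in> Cliqgm X)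
    \<and> (\<forall>C\<in>Cliqgm X. \<forall>x\<in>X. \<forall>x'\<in>X. \<exists>t. (\<exists>K\<in>C t. x \<in> K \<and> x' \<in> K) \<and>
          (\<forall>s. (\<exists>K\<in>C s. x \<in> K \<and> x' \<in> K) \<longrightarrow> t \<le> s))
    \<and> (\<forall>C\<in>Cliqgm X. Psi X C \<in> Net X)
    \<and> (\<forall>N\<in>Net X. Psi X (Phi X N) = N)
    \<and> (\<forall>C\<in>Cliqgm X. Phi X (Psi X C) = C)
    \<and> bij_betw (Phi X) (Net X) (Cliqgm X)
    \<and> (\<forall>N\<in>Net X. \<forall>N'\<in>Net X.
          (\<forall>x\<in>X. \<forall>x'\<in>X. N (x, x') \<ge> N' (x, x')) \<longleftrightarrow> (\<forall>t. cliq_le (Phi X N t) (Phi X N' t)))"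
proof (intro conjI)
  show "\<forall>N\<in>Net X. Phi X N \<in> Cliqgm X"
    by (intro ballI) (rule Phi_Cliqgm[OF _ assms(1,2)])
  show "\<forall>C\<in>Cliqgm X. \<forall>x\<in>X. \<forall>x'\<in>X. \<exists>t. (\<exists>K\<in>C t. x \<in> K \<and> x' \<in> K) \<and>
          (\<forall>s. (\<exists>K\<in>C s. x \<in> K \<and> x' \<in> K) \<longrightarrow> t \<le> s)"
    by (intro ballI) (rule Cliqgm_min)
  show "\<forall>C\<in>Cliqgm X. Psi X C \<in> Net X" by (intro ballI) (rule Psi_Net)
  show "\<forall>N\<in>Net X. Psi X (Phi X N) = N" by (intro ballI) (rule Psi_Phi[OF _ assms(1)])
  show "\<forall>C\<in>Cliqgm X. Phi X (Psi X C) = C" by (intro ballI) (rule Phi_Psi)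
  show "bij_betw (Phi X) (Net X) (Cliqgm X)"
  proof (rule bij_betw_byWitness[where f'="Psi X"])
    show "\<forall>a\<in>Net X. Psi X (Phi X a) = a" by (intro ballI) (rule Psi_Phi[OF _ assms(1)])
    show "\<forall>a'\<in>Cliqgm X. Phi X (Psi X a') = a'" by (intro ballI) (rule Phi_Psi)
    show "Phi X ` Net X \<subseteq> Cliqgm X" by (rule image_subsetI) (rule Phi_Cliqgm[OF _ assms(1,2)])
    show "Psi X ` Cliqgm X \<subseteq> Net X" by (rule image_subsetI) (rule Psi_Net)
  qed
  show "\<forall>N\<in>Net X. \<forall>N'\<in>Net X.
          (\<forall>x\<in>X. \<forall>x'\<in>X. N (x, x') \<ge> N' (x, x')) \<longleftrightarrow> (\<forall>t. cliq_le (Phi X N t) (Phi X N' t))"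
    by (intro ballI) (rule order_iso[OF _ _ assms(1)])
qed

end
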